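(* If a topologically mixing homeomorphism $f$ of a compact metric space has the L-shadowing property, then it has the two-sided limit shadowing property.
   Context: L-shadowing: for every $\varepsilon>0$ there is $\delta>0$ such that every sequence $(x_k)_{k\in\mathbb{Z}}$ with $d(f(x_k),x_{k+1})\le\delta$ for all $k$ and $d(f(x_k),x_{k+1})\to0$ as $|k|\to\infty$ admits $z$ with $d(f^k(z),x_k)\le\varepsilon$ for all $k$ and $d(f^k(z),x_k)\to0$ as $|k|\to\infty$. Two-sided limit shadowing: for every $(x_k)_{k\in\mathbb{Z}}$ with $d(f(x_k),x_{k+1})\to0$ as $|k|\to\infty$ there is $y$ with $d(f^k(y),x_k)\to0$ as $|k|\to\infty$. Topologically mixing: for all nonempty open $U,V$ there is $N$ with $f^k(U)\cap V\ne\emptyset$ for all $k\ge N$. *)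

theory Defs
  imports "HOL-Analysis.Analysis"
begin

definition topologically_mixing :: "'a::metric_space set \<Rightarrow> ('a \<Rightarrow> 'a) \<Rightarrow> bool" where
  "topologically_mixing X f \<longleftrightarrow>
     (\<forall>U V. openin (top_of_set X) U \<and> openin (top_of_set X) V \<and> U \<noteq> {} \<and> V \<noteq> {} \<longrightarrow>
        (\<exists>N::nat. \<forall>k\<ge>N. (f ^^ k) ` U \<inter> V \<noteq> {}))"

definition iter_int :: "'a set \<Rightarrow> ('a \<Rightarrow> 'a) \<Rightarrow> int \<Rightarrow> 'a \<Rightarrow> 'a" where
  "iter_int X f k = (if k \<ge> 0 then f ^^ nat k else inv_into X f ^^ nat (- k))"

definition tends_zero_two_sided :: "(int \<Rightarrow> real) \<Rightarrow> bool" where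
  "tends_zero_two_sided a \<longleftrightarrow> (a \<longlongrightarrow> 0) at_top \<and> (a \<longlongrightarrow> 0) at_bot"

definition L_shadowing :: "'a::metric_space set \<Rightarrow> ('a \<Rightarrow> 'a) \<Rightarrow> bool" where
  "L_shadowing X f \<longleftrightarrow>
    (\<forall>\<epsilon>>0. \<exists>\<delta>>0. \<forall>x::int \<Rightarrow> 'a. (\<forall>k. x k \<in> X) \<and>
        (\<forall>k. dist (f (x k)) (x (k + 1)) \<le> \<delta>) \<and>
        tends_zero_two_sided (\<lambda>k. dist (f (x k)) (x (k + 1))) \<longrightarrow>
        (\<exists>z\<in>X. (\<forall>k. dist (iter_int X f k z) (x k) \<le> \<epsilon>) \<and>
               tends_zero_two_sided (\<lambda>k. dist (iter_int X f k z) (x k))))"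

definition two_sided_limit_shadowing :: "'a::metric_space set \<Rightarrow> ('a \<Rightarrow> 'a) \<Rightarrow> bool" where
  "two_sided_limit_shadowing X f \<longleftrightarrow>
    (\<forall>x::int \<Rightarrow> 'a. (\<forall>k. x k \<in> X) \<and>
        tends_zero_two_sided (\<lambda>k. dist (f (x k)) (x (k + 1))) \<longrightarrow>
        (\<exists>y\<in>X. tends_zero_two_sided (\<lambda>k. dist (iter_int X f k y) (x k))))"

end

theory Submission
  imports Defs
begin

lemma funpow_in:
  assumes "f ` X \<subseteq> X" "w \<in> X" shows "(f ^^ n) w \<in> X"
  using assms by (induction n) auto

lemma unif_mix:
  assumes "compact X" "f ` X \<subseteq> X" "topologically_mixing X f" "\<delta> > 0"
  shows "\<exists>M. \<forall>p\<in>X. \<forall>q\<in>X. \<forall>n\<ge>M. \<exists>w\<in>X. dist w p < \<delta> \<and> dist ((f^^n) w) q < \<delta>"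
proof -
  have cov: "X \<subseteq> (\<Union>c\<in>X. ball c (\<delta>/2))" using assms(4) by auto
  obtain F where F: "F \<subseteq> X" "finite F" "X \<subseteq> (\<Union>c\<in>F. ball c (\<delta>/2))"
  proof (rule compactE_image[OF assms(1) _ cov])
    show "\<And>T. T \<in> X \<Longrightarrow> open (ball T (\<delta>/2))" by simp
  qed (rule that)
  have "\<forall>ab\<in>F\<times>F. \<exists>N. \<forall>k\<ge>N. (f^^k) ` (X \<inter> ball (fst ab) (\<delta>/2)) \<inter> (X \<inter> ball (snd ab) (\<delta>/2)) \<noteq> {}"
  proof
    fix ab assume ab: "ab \<in> F \<times> F"
    have o1: "openin (top_of_set X) (X \<inter> ball (fst ab) (\<delta>/2))"
      by (simp add: openin_open_Int)
    have o2: "openin (top_of_set X) (X \<inter> ball (snd ab) (\<delta>/2))"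
      by (simp add: openin_open_Int)
    have "fst ab \<in> X \<inter> ball (fst ab) (\<delta>/2)" using ab F(1) assms(4) by auto
    then have n1: "X \<inter> ball (fst ab) (\<delta>/2) \<noteq> {}" by blast
    have "snd ab \<in> X \<inter> ball (snd ab) (\<delta>/2)" using ab F(1) assms(4) by auto
    then have n2: "X \<inter> ball (snd ab) (\<delta>/2) \<noteq> {}" by blast
    show "\<exists>N. \<forall>k\<ge>N. (f^^k) ` (X \<inter> ball (fst ab) (\<delta>/2)) \<inter> (X \<inter> ball (snd ab) (\<delta>/2)) \<noteq> {}"
      using assms(3) o1 o2 n1 n2 unfolding topologically_mixing_def by blast
  qed
  from bchoice[OF this] obtain N where N0: "\<forall>ab\<in>F\<times>F. \<forall>k\<ge>N ab.
      (f^^k) ` (X \<inter> ball (fst ab) (\<delta>/2)) \<inter> (X \<inter> ball (snd ab) (\<delta>/2)) \<noteq> {}"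
    ..
  have N: "\<And>ab k. ab \<in> F\<times>F \<Longrightarrow> k \<ge> N ab \<Longrightarrow>
      (f^^k) ` (X \<inter> ball (fst ab) (\<delta>/2)) \<inter> (X \<inter> ball (snd ab) (\<delta>/2)) \<noteq> {}"
    using N0 by blast
  define M where "M = Max (insert 0 (N ` (F\<times>F)))"
  have fin: "finite (insert 0 (N ` (F\<times>F)))" using F(2) by simp
  show ?thesis
  proof (intro exI ballI allI impI)
    fix p q n assume p: "p \<in> X" and q: "q \<in> X" and n: "n \<ge> M"
    have "p \<in> (\<Union>c\<in>F. ball c (\<delta>/2))" using F(3) p by blast
    then obtain a where a: "a \<in> F" "dist a p < \<delta>/2" by auto
    have "q \<in> (\<Union>c\<in>F. ball c (\<delta>/2))" using F(3) q by blast
    then obtain b where b: "b \<in> F" "dist b q < \<delta>/2" by auto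
    have "N (a,b) \<le> M" unfolding M_def using fin a(1) b(1) by (intro Max_ge) auto
    then have "(f^^n) ` (X \<inter> ball a (\<delta>/2)) \<inter> (X \<inter> ball b (\<delta>/2)) \<noteq> {}"
      using N[of "(a,b)" n] a b n by auto
    then obtain u where "u \<in> X \<inter> ball a (\<delta>/2)" "(f^^n) u \<in> X \<inter> ball b (\<delta>/2)" by blast
    then have u: "u \<in> X" "dist a u < \<delta>/2" "dist b ((f^^n) u) < \<delta>/2" by auto
    have "dist u p < \<delta>" using u(2) a(2) dist_triangle[of u p a] by (simp add: dist_commute)
    moreover have "dist ((f^^n) u) q < \<delta>" using u(3) b(2) dist_triangle[of "(f^^n) u" q b] by (simp add: dist_commute)
    ultimately show "\<exists>w\<in>X. dist w p < \<delta> \<and> dist ((f^^n) w) q < \<delta>" using u(1) by blast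
  qed
qed

theorem mainTheorem10:
  fixes X :: "'a::metric_space set" and f :: "'a \<Rightarrow> 'a"
  assumes "compact X"
    and "homeomorphism X X f (inv_into X f)"
    and "topologically_mixing X f"
    and "L_shadowing X f"
  shows "two_sided_limit_shadowing X f"
  unfolding two_sided_limit_shadowing_def
proof (intro allI impI)
  fix x :: "int \<Rightarrow> 'a"
  assume A: "(\<forall>k. x k \<in> X) \<and> tends_zero_two_sided (\<lambda>k. dist (f (x k)) (x (k + 1)))"
  then have xX: "\<And>k. x k \<in> X" and lim1: "((\<lambda>k. dist (f (x k)) (x (k + 1))) \<longlongrightarrow> 0) at_top"
     and lim2: "((\<lambda>k. dist (f (x k)) (x (k + 1))) \<longlongrightarrow> 0) at_bot"
    unfolding tends_zero_two_sided_def by auto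
  have fX: "f ` X \<subseteq> X" using assms(2) unfolding homeomorphism_def by auto
  have "\<exists>\<delta>>0. \<forall>x::int \<Rightarrow> 'a. (\<forall>k. x k \<in> X) \<and>
        (\<forall>k. dist (f (x k)) (x (k + 1)) \<le> \<delta>) \<and>
        tends_zero_two_sided (\<lambda>k. dist (f (x k)) (x (k + 1))) \<longrightarrow>
        (\<exists>z\<in>X. (\<forall>k. dist (iter_int X f k z) (x k) \<le> 1) \<and>
               tends_zero_two_sided (\<lambda>k. dist (iter_int X f k z) (x k)))"
    using assms(4) unfolding L_shadowing_def by simp
  then obtain \<delta> where dpos: "\<delta> > 0" and Lsall: "\<forall>x::int \<Rightarrow> 'a. (\<forall>k. x k \<in> X) \<and>
        (\<forall>k. dist (f (x k)) (x (k + 1)) \<le> \<delta>) \<and>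
        tends_zero_two_sided (\<lambda>k. dist (f (x k)) (x (k + 1))) \<longrightarrow>
        (\<exists>z\<in>X. (\<forall>k. dist (iter_int X f k z) (x k) \<le> 1) \<and>
               tends_zero_two_sided (\<lambda>k. dist (iter_int X f k z) (x k)))"
    by (elim exE conjE)
  obtain M where M: "\<And>p q n. p \<in> X \<Longrightarrow> q \<in> X \<Longrightarrow> n \<ge> M \<Longrightarrow>
      \<exists>w\<in>X. dist w p < \<delta> \<and> dist ((f^^n) w) q < \<delta>"
    using unif_mix[OF assms(1) fX assms(3) dpos] by blast
  have "eventually (\<lambda>k. dist (f (x k)) (x (k + 1)) < \<delta>) at_top"
    using lim1 dpos by (simp add: order_tendstoD(2))
  then obtain N1 where N1: "\<And>k. k \<ge> N1 \<Longrightarrow> dist (f (x k)) (x (k + 1)) < \<delta>"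
    unfolding eventually_at_top_linorder by blast
  have "eventually (\<lambda>k. dist (f (x k)) (x (k + 1)) < \<delta>) at_bot"
    using lim2 dpos by (simp add: order_tendstoD(2))
  then obtain N2 where N2: "\<And>k. k \<le> N2 \<Longrightarrow> dist (f (x k)) (x (k + 1)) < \<delta>"
    unfolding eventually_at_bot_linorder by blast
  define K :: int where "K = max 1 (max (int M) (max N1 (- N2)))"
  have K1: "K \<ge> 1" "K \<ge> int M" "K \<ge> N1" "-K \<le> N2" unfolding K_def by auto
  have "nat (2*K - 1) \<ge> M" using K1 by auto
  then obtain w where wX: "w \<in> X" and w1: "dist w (f (x (-K))) < \<delta>"
      and w2: "dist ((f^^nat (2*K-1)) w) (x K) < \<delta>"
    using M[of "f (x (-K))" "x K" "nat (2*K-1)"] fX xX by blast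
  define y where "y k = (if k \<le> -K then x k else if k \<ge> K then x k else (f^^nat (k+K-1)) w)" for k
  have yX: "\<forall>k. y k \<in> X" unfolding y_def using xX funpow_in[OF fX wX] by auto
  have err: "dist (f (y k)) (y (k+1)) = dist (f (x k)) (x (k + 1))" if "k \<le> -K-1 \<or> k \<ge> K" for k
    using that K1 unfolding y_def by auto
  have errb: "\<forall>k. dist (f (y k)) (y (k + 1)) \<le> \<delta>"
  proof
    fix k
    consider "k \<le> -K-1" | "k \<ge> K" | "k = -K" | "k = K - 1" "k \<noteq> -K" | "-K < k" "k < K - 1"
      by linarith
    then show "dist (f (y k)) (y (k + 1)) \<le> \<delta>"
    proof cases
      case 1 then show ?thesis using err[of k] N2[of k] K1 by auto
    next
      case 2 then show ?thesis using err[of k] N1[of k] K1 by auto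
    next
      case 3 then have "y k = x (-K)" "y (k+1) = w" using K1 unfolding y_def by auto
      then show ?thesis using 3 w1 by (simp add: dist_commute)
    next
      case 4
      then have yk: "y k = (f^^nat (2*K-2)) w" "y (k+1) = x K" using K1 unfolding y_def by auto
      have "f ((f^^nat (2*K-2)) w) = (f^^nat (2*K-1)) w"
      proof -
        have "nat (2*K-1) = Suc (nat (2*K-2))" using K1 by auto
        then show ?thesis by simp
      qed
      then show ?thesis using yk w2 by simp
    next
      case 5
      then have yk: "y k = (f^^nat (k+K-1)) w" "y (k+1) = (f^^nat (k+1+K-1)) w" unfolding y_def by auto
      have "nat (k+1+K-1) = Suc (nat (k+K-1))" using 5 by auto
      then show ?thesis using yk dpos by simp
    qed
  qed
  have ev1: "eventually (\<lambda>k. dist (f (x k)) (x (k + 1)) = dist (f (y k)) (y (k + 1))) at_top"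
    unfolding eventually_at_top_linorder using err by (intro exI[of _ K]) auto
  have ev2: "eventually (\<lambda>k. dist (f (x k)) (x (k + 1)) = dist (f (y k)) (y (k + 1))) at_bot"
    unfolding eventually_at_bot_linorder using err by (intro exI[of _ "-K-1"]) auto
  have tz: "tends_zero_two_sided (\<lambda>k. dist (f (y k)) (y (k + 1)))"
    unfolding tends_zero_two_sided_def
    using tendsto_cong[OF ev1, THEN iffD1, OF lim1] tendsto_cong[OF ev2, THEN iffD1, OF lim2] by (rule conjI)
  have "\<exists>z\<in>X. (\<forall>k. dist (iter_int X f k z) (y k) \<le> 1) \<and>
               tends_zero_two_sided (\<lambda>k. dist (iter_int X f k z) (y k))"
    using mp[OF spec[OF Lsall, of y] conjI[OF yX conjI[OF errb tz]]] .
  then obtain z where zX: "z \<in> X" and zt: "tends_zero_two_sided (\<lambda>k. dist (iter_int X f k z) (y k))"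
    by blast
  have ev3: "eventually (\<lambda>k. dist (iter_int X f k z) (y k) = dist (iter_int X f k z) (x k)) at_top"
    unfolding eventually_at_top_linorder y_def by (intro exI[of _ K]) auto
  have ev4: "eventually (\<lambda>k. dist (iter_int X f k z) (y k) = dist (iter_int X f k z) (x k)) at_bot"
    unfolding eventually_at_bot_linorder y_def by (intro exI[of _ "-K"]) auto
  have "tends_zero_two_sided (\<lambda>k. dist (iter_int X f k z) (x k))"
    using zt unfolding tends_zero_two_sided_def
    using tendsto_cong[OF ev3, THEN iffD1] tendsto_cong[OF ev4, THEN iffD1] by blast
  then show "\<exists>y\<in>X. tends_zero_two_sided (\<lambda>k. dist (iter_int X f k y) (x k))" using zX by blast
qed

end
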